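(* For every $n\ge 8$, the Pachner graph $\mathcal{S}_n$ of $n$-vertex stacked $2$-spheres is disconnected.
   Context: A triangulated $2$-sphere is a finite simplicial complex whose geometric realization is homeomorphic to the $2$-sphere. Edge flip $ab\mapsto cd$: if $abc,abd$ are triangles and $cd$ is not an edge, replace $abc,abd$ by $acd,bcd$. A stacked $3$-ball is a simplicial complex obtained from a single tetrahedron by repeatedly gluing a new tetrahedron along exactly one boundary triangle, introducing one new vertex each time. A stacked $2$-sphere is a triangulated $2$-sphere isomorphic to the boundary of a stacked $3$-ball. $\mathcal{S}_n$ is the graph whose nodes are the isomorphism classes of $n$-vertex stacked $2$-spheres, two nodes being adjacent iff a representative of one can be transformed into a representative of the other by a single edge flip. *)

theory Defs
  imports Main
begin

text \<open>Pure simplicial complexes are represented by their sets of facets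
(vertex type nat). A 3-ball is given by its set of tetrahedra (4-sets), a
2-sphere by its set of triangles (3-sets).\<close>

definition boundary_complex :: "nat set set \<Rightarrow> nat set set" where
  "boundary_complex B = {t. card t = 3 \<and> (\<exists>!T. T \<in> B \<and> t \<subseteq> T)}"

inductive stacked_ball :: "nat set set \<Rightarrow> bool" where
  single: "card T = 4 \<Longrightarrow> stacked_ball {T}"
| glue: "\<lbrakk> stacked_ball B; t \<in> boundary_complex B; v \<notin> \<Union>B \<rbrakk>
          \<Longrightarrow> stacked_ball (insert (insert v t) B)"

definition complex_iso :: "nat set set \<Rightarrow> nat set set \<Rightarrow> bool" where
  "complex_iso K L \<longleftrightarrow> (\<exists>f. bij_betw f (\<Union>K) (\<Union>L) \<and> (\<lambda>s. f ` s) ` K = L)"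

definition stacked_sphere :: "nat set set \<Rightarrow> bool" where
  "stacked_sphere S \<longleftrightarrow> (\<exists>B. stacked_ball B \<and> complex_iso S (boundary_complex B))"

definition edge_flip :: "nat set set \<Rightarrow> nat set set \<Rightarrow> bool" where
  "edge_flip K L \<longleftrightarrow> (\<exists>a b c d. distinct [a, b, c, d] \<and>
      {a, b, c} \<in> K \<and> {a, b, d} \<in> K \<and> \<not> (\<exists>s\<in>K. {c, d} \<subseteq> s) \<and>
      L = (K - {{a, b, c}, {a, b, d}}) \<union> {{a, c, d}, {b, c, d}})"

definition num_vertices :: "nat set set \<Rightarrow> nat" where
  "num_vertices K = card (\<Union>K)"

text \<open>Adjacency in the Pachner graph S_n, lifted to representatives:
a representative of the class of K flips to a representative of the class of L.\<close>
definition pachner_adj :: "nat \<Rightarrow> nat set set \<Rightarrow> nat set set \<Rightarrow> bool" where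
  "pachner_adj n K L \<longleftrightarrow>
     stacked_sphere K \<and> num_vertices K = n \<and> stacked_sphere L \<and> num_vertices L = n \<and>
     (\<exists>K' L'. complex_iso K K' \<and> complex_iso L L' \<and> edge_flip K' L')"

definition pachner_graph_connected :: "nat \<Rightarrow> bool" where
  "pachner_graph_connected n \<longleftrightarrow>
     (\<forall>K L. stacked_sphere K \<and> num_vertices K = n \<and> stacked_sphere L \<and> num_vertices L = n
        \<longrightarrow> (symclp (pachner_adj n))\<^sup>*\<^sup>* K L)"

end

theory Submission
  imports Defs
begin


lemma bd_glue:
  assumes v: "v \<notin> \<Union>B" and t: "t \<in> boundary_complex B"
  shows "boundary_complex (insert (insert v t) B) =
         (boundary_complex B - {t}) \<union> {s. \<exists>x y. x \<in> t \<and> y \<in> t \<and> x \<noteq> y \<and> s = {v,x,y}}"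
proof -
  have ct: "card t = 3" and ex: "\<exists>!T. T \<in> B \<and> t \<subseteq> T" using t by (auto simp: boundary_complex_def)
  have vt: "v \<notin> t" using ex v by blast
  have newB: "insert v t \<notin> B" using v by blast
  show ?thesis
  proof (intro set_eqI iffI)
    fix s assume "s \<in> boundary_complex (insert (insert v t) B)"
    then have cs: "card s = 3" and u: "\<exists>!T. T \<in> insert (insert v t) B \<and> s \<subseteq> T"
      by (auto simp: boundary_complex_def)
    show "s \<in> (boundary_complex B - {t}) \<union> {s. \<exists>x y. x \<in> t \<and> y \<in> t \<and> x \<noteq> y \<and> s = {v,x,y}}"
    proof (cases "v \<in> s")
      case True
      then obtain T where T: "T \<in> insert (insert v t) B" "s \<subseteq> T" using u by blast
      have "T = insert v t" using T True v by blast
      then have "s - {v} \<subseteq> t" using T by blast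
      moreover have "card (s - {v}) = 2" using cs True by simp
      ultimately obtain x y where "s - {v} = {x,y}" "x \<noteq> y" by (meson card_2_iff)
      then show ?thesis using True \<open>s - {v} \<subseteq> t\<close> by blast
    next
      case False
      have "s \<noteq> t"
      proof
        assume "s = t"
        obtain T where "T \<in> B" "t \<subseteq> T" using ex by blast
        then show False using u \<open>s = t\<close> newB by blast
      qed
      moreover have "\<not> s \<subseteq> insert v t"
      proof
        assume "s \<subseteq> insert v t"
        then have "s \<subseteq> t" using False by blast
        then have "s = t" using cs ct by (metis card_subset_eq finite_insert card.infinite zero_neq_numeral \<open>s\<subseteq>t\<close>)
        then show False using \<open>s \<noteq> t\<close> by blast
      qed
      moreover have "\<exists>!T. T \<in> B \<and> s \<subseteq> T" using u calculation by auto
      ultimately show ?thesis using cs by (auto simp: boundary_complex_def)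
    qed
  next
    fix s assume "s \<in> (boundary_complex B - {t}) \<union> {s. \<exists>x y. x \<in> t \<and> y \<in> t \<and> x \<noteq> y \<and> s = {v,x,y}}"
    then show "s \<in> boundary_complex (insert (insert v t) B)"
    proof
      assume s: "s \<in> boundary_complex B - {t}"
      then have cs: "card s = 3" and u: "\<exists>!T. T \<in> B \<and> s \<subseteq> T" by (auto simp: boundary_complex_def)
      have "\<not> s \<subseteq> insert v t"
      proof
        assume "s \<subseteq> insert v t"
        moreover have "v \<notin> s" using u v by blast
        ultimately have "s \<subseteq> t" by blast
        then have "s = t" using cs ct by (metis card_subset_eq card.infinite zero_neq_numeral)
        then show False using s by blast
      qed
      then show ?thesis using cs u by (auto simp: boundary_complex_def)
    next
      assume "s \<in> {s. \<exists>x y. x \<in> t \<and> y \<in> t \<and> x \<noteq> y \<and> s = {v,x,y}}"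
      then obtain x y where xy: "x \<in> t" "y \<in> t" "x \<noteq> y" "s = {v,x,y}" by blast
      have "v \<noteq> x" "v \<noteq> y" using xy vt by auto
      then have cs: "card s = 3" using xy by simp
      have "\<exists>!T. T \<in> insert (insert v t) B \<and> s \<subseteq> T"
        using xy v by (intro ex1I[of _ "insert v t"]) auto
      then show ?thesis using cs by (auto simp: boundary_complex_def)
    qed
  qed
qed

definition edg :: "nat set set \<Rightarrow> nat \<Rightarrow> nat \<Rightarrow> bool" where
  "edg X x y \<longleftrightarrow> x \<noteq> y \<and> (\<exists>s\<in>X. x \<in> s \<and> y \<in> s)"

lemma bd_single: "card T = 4 \<Longrightarrow> boundary_complex {T} = {s. card s = 3 \<and> s \<subseteq> T}"
  by (auto simp: boundary_complex_def)

lemma bd_sub: "s \<in> boundary_complex X \<Longrightarrow> \<exists>T\<in>X. s \<subseteq> T"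
  by (auto simp: boundary_complex_def)

lemma bd_card: "s \<in> boundary_complex X \<Longrightarrow> card s = 3"
  by (auto simp: boundary_complex_def)

lemma edg_bd_sub: "edg (boundary_complex X) x y \<Longrightarrow> edg X x y"
  unfolding edg_def by (meson bd_sub subsetD)

lemma ball_card: "stacked_ball B \<Longrightarrow> T \<in> B \<Longrightarrow> card T = 4"
proof (induction B rule: stacked_ball.induct)
  case (single T) then show ?case by simp
next
  case (glue B t v)
  have "card t = 3" "v \<notin> t" using glue(2,3) bd_sub[OF glue(2)] by (auto simp: boundary_complex_def)
  moreover have "finite t" using \<open>card t = 3\<close> by (metis card.infinite zero_neq_numeral)
  ultimately have "card (insert v t) = 4" by simp
  then show ?case using glue by auto
qed

lemma card3_other: "card t = 3 \<Longrightarrow> y \<in> t \<Longrightarrow> \<exists>z\<in>t. z \<noteq> y"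
proof -
  assume a: "card t = 3" "y \<in> t"
  then have "card (t - {y}) = 2" by simp
  then have "t - {y} \<noteq> {}" by (metis card.empty zero_neq_numeral)
  then obtain z where "z \<in> t - {y}" by blast
  then show ?thesis by blast
qed

lemma base: assumes c: "card T = 4" and xy: "x \<noteq> y" "x \<in> T" "y \<in> T"
  shows "\<exists>s. card s = 3 \<and> s \<subseteq> T \<and> x \<in> s \<and> y \<in> s"
proof -
    have fT: "finite T" using c by (metis card.infinite zero_neq_numeral)
    have "card {x,y} = 2" using xy by simp
    then have "card (T - {x,y}) = 2" using xy c fT by (subst card_Diff_subset) auto
    then have "T - {x,y} \<noteq> {}" by (metis card.empty zero_neq_numeral)
    then obtain w where w: "w \<in> T - {x,y}" by blast
    have "card (T - {w}) = 3" using w c fT by (simp add: card_Diff_singleton)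
    then show ?thesis using xy w by (intro exI[of _ "T - {w}"]) auto
qed

lemma edg_bd_eq: "stacked_ball B \<Longrightarrow> edg (boundary_complex B) x y \<longleftrightarrow> edg B x y"
proof (induction B arbitrary: x y rule: stacked_ball.induct)
  case (single T)
  show ?case
  proof
    assume "edg (boundary_complex {T}) x y" then show "edg {T} x y" by (rule edg_bd_sub)
  next
    assume e: "edg {T} x y"
    then have xy: "x \<noteq> y" "x \<in> T" "y \<in> T" by (auto simp: edg_def)
    obtain s where "card s = 3" "s \<subseteq> T" "x \<in> s" "y \<in> s" using base[OF single xy] by blast
    then have "s \<in> boundary_complex {T}" "x \<in> s" "y \<in> s" using single by (auto simp: bd_single)
    then show "edg (boundary_complex {T}) x y" using xy unfolding edg_def by blast
  qed
next
  case (glue B t v)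
  have ct: "card t = 3" and vt: "v \<notin> t" using glue(2,3) bd_sub[OF glue(2)] by (auto simp: boundary_complex_def)
  note bg = bd_glue[OF glue(3,2)]
  show ?case
  proof
    assume "edg (boundary_complex (insert (insert v t) B)) x y" then show "edg (insert (insert v t) B) x y" by (rule edg_bd_sub)
  next
    assume e: "edg (insert (insert v t) B) x y"
    have fv: "{v,p,q} \<in> boundary_complex (insert (insert v t) B)" if "p \<in> t" "q \<in> t" "p \<noteq> q" for p q
      unfolding bg using that by blast
    show "edg (boundary_complex (insert (insert v t) B)) x y"
    proof (cases "edg B x y")
      case True
      then have "edg (boundary_complex B) x y" using glue.IH by blast
      then obtain s where s: "s \<in> boundary_complex B" "x \<in> s" "y \<in> s" "x \<noteq> y" unfolding edg_def by blast
      show ?thesis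
      proof (cases "s = t")
        case True
        then have "x \<in> t" "y \<in> t" using s by auto
        then have "{v,x,y} \<in> boundary_complex (insert (insert v t) B)" using fv s(4) by blast
        then show ?thesis unfolding edg_def using s(4) by (intro conjI bexI[OF _ \<open>{v,x,y} \<in> _\<close>]) auto
      next
        case False then have "s \<in> boundary_complex (insert (insert v t) B)" unfolding bg using s by simp
        then show ?thesis using s unfolding edg_def by blast
      qed
    next
      case False
      then have xy: "x \<in> insert v t" "y \<in> insert v t" "x \<noteq> y" using e by (auto simp: edg_def)
      show ?thesis
      proof (cases "x = v")
        case True
        then have "y \<in> t" using xy by auto
        then obtain z where "z \<in> t" "z \<noteq> y" using card3_other[OF ct] by blast
        then show ?thesis using fv[of y z] True xy \<open>y \<in> t\<close> unfolding edg_def by blast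
      next
        case False
        then have "x \<in> t" using xy by auto
        show ?thesis
        proof (cases "y = v")
          case True
          obtain z where "z \<in> t" "z \<noteq> x" using card3_other[OF ct \<open>x \<in> t\<close>] by blast
          then have "{v,x,z} \<in> boundary_complex (insert (insert v t) B)" using fv \<open>x \<in> t\<close> by blast
          then show ?thesis unfolding edg_def using True xy by (intro conjI bexI[OF _ \<open>{v,x,z} \<in> _\<close>]) auto
        next
          case False
          then have "y \<in> t" using xy by auto
          then have "{v,x,y} \<in> boundary_complex (insert (insert v t) B)" using fv \<open>x \<in> t\<close> xy by blast
          then show ?thesis unfolding edg_def using xy by (intro conjI bexI[OF _ \<open>{v,x,y} \<in> _\<close>]) auto
        qed
      qed
    qed
  qed
qed


lemma edgI: "x \<noteq> y \<Longrightarrow> s \<in> X \<Longrightarrow> x \<in> s \<Longrightarrow> y \<in> s \<Longrightarrow> edg X x y"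
  unfolding edg_def by blast

lemma edg_sym: "edg X x y \<Longrightarrow> edg X y x"
  unfolding edg_def by blast

lemma edg_vert: "edg X x y \<Longrightarrow> x \<in> \<Union>X \<and> y \<in> \<Union>X"
  unfolding edg_def by blast

lemma edg_insert: "edg (insert N B) x y \<longleftrightarrow> edg B x y \<or> (x \<noteq> y \<and> x \<in> N \<and> y \<in> N)"
  unfolding edg_def by blast

definition cliq :: "nat set set \<Rightarrow> nat set \<Rightarrow> bool" where
  "cliq X W \<longleftrightarrow> (\<forall>x\<in>W. \<forall>y\<in>W. x \<noteq> y \<longrightarrow> edg X x y)"

definition noK5 :: "nat set set \<Rightarrow> bool" where
  "noK5 X \<longleftrightarrow> (\<forall>W. card W = 5 \<longrightarrow> \<not> cliq X W)"

definition chord4 :: "nat set set \<Rightarrow> bool" where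
  "chord4 X \<longleftrightarrow> (\<forall>a b c d. distinct [a,b,c,d] \<and> edg X a b \<and> edg X b c \<and> edg X c d \<and> edg X d a
      \<longrightarrow> edg X a c \<or> edg X b d)"

lemma cliqD: "cliq X W \<Longrightarrow> x \<in> W \<Longrightarrow> y \<in> W \<Longrightarrow> x \<noteq> y \<Longrightarrow> edg X x y"
  unfolding cliq_def by blast

lemma glue_facts:
  assumes "t \<in> boundary_complex B" "v \<notin> \<Union>B"
  shows "card t = 3" "v \<notin> t" "\<And>x y. x \<in> t \<Longrightarrow> y \<in> t \<Longrightarrow> x \<noteq> y \<Longrightarrow> edg B x y"
    "\<And>w. edg (insert (insert v t) B) v w \<Longrightarrow> w \<in> t"
    "\<And>x y. edg (insert (insert v t) B) x y \<Longrightarrow> x \<noteq> v \<Longrightarrow> y \<noteq> v \<Longrightarrow> edg B x y"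
proof -
  obtain T where T: "T \<in> B" "t \<subseteq> T" using bd_sub[OF assms(1)] by blast
  show "card t = 3" using assms(1) by (rule bd_card)
  show vt: "v \<notin> t" using T assms(2) by blast
  show xy: "\<And>x y. x \<in> t \<Longrightarrow> y \<in> t \<Longrightarrow> x \<noteq> y \<Longrightarrow> edg B x y"
    using T by (meson edgI subsetD)
  show "\<And>w. edg (insert (insert v t) B) v w \<Longrightarrow> w \<in> t"
    using assms(2) unfolding edg_def by blast
  show "\<And>x y. edg (insert (insert v t) B) x y \<Longrightarrow> x \<noteq> v \<Longrightarrow> y \<noteq> v \<Longrightarrow> edg B x y"
  proof -
    fix x y assume "edg (insert (insert v t) B) x y" "x \<noteq> v" "y \<noteq> v"
    then have "edg B x y \<or> (x \<noteq> y \<and> x \<in> t \<and> y \<in> t)" unfolding edg_insert by blast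
    then show "edg B x y" using xy by blast
  qed
qed

lemma card_le_sub: "finite A \<Longrightarrow> W \<subseteq> A \<Longrightarrow> card W \<le> card A"
  by (rule card_mono)

lemma ball_noK5: "stacked_ball B \<Longrightarrow> noK5 B"
proof (induction B rule: stacked_ball.induct)
  case (single T)
  have fT: "finite T" using single by (metis card.infinite zero_neq_numeral)
  show ?case unfolding noK5_def
  proof (intro allI impI notI)
    fix W assume W: "card W = 5" "cliq {T} W"
    have "W \<subseteq> T"
    proof
      fix w assume w: "w \<in> W"
      have "W - {w} \<noteq> {}" using W(1) w by (metis card_Diff_singleton card.empty diff_Suc_1 numeral_eq_Suc pred_numeral_simps zero_neq_numeral card_1_singleton_iff Diff_empty card.infinite)
      then obtain y where "y \<in> W" "y \<noteq> w" by blast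
      then have "edg {T} w y" using cliqD[OF W(2) w] by simp
      then show "w \<in> T" unfolding edg_def by blast
    qed
    then have "card W \<le> 4" using card_mono[OF fT] single by fastforce
    then show False using W by simp
  qed
next
  case (glue B t v)
  note g = glue_facts[OF glue(2,3)]
  show ?case unfolding noK5_def
  proof (intro allI impI notI)
    fix W assume W: "card W = 5" "cliq (insert (insert v t) B) W"
    show False
    proof (cases "v \<in> W")
      case True
      have "W - {v} \<subseteq> t"
      proof
        fix w assume "w \<in> W - {v}"
        then have "w \<in> W" "v \<noteq> w" by auto
        then have "edg (insert (insert v t) B) v w" using cliqD[OF W(2) True] by simp
        then show "w \<in> t" by (rule g(4))
      qed
      moreover have "finite t" using g(1) by (metis card.infinite zero_neq_numeral)
      ultimately have "card (W - {v}) \<le> 3" using g(1) card_mono by metis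
      moreover have "card (W - {v}) = 4" using W(1) True by simp
      ultimately show False by simp
    next
      case False
      have "cliq B W" unfolding cliq_def
      proof (intro ballI impI)
        fix x y assume "x \<in> W" "y \<in> W" "x \<noteq> y"
        then have "edg (insert (insert v t) B) x y" using cliqD[OF W(2)] by simp
        moreover have "x \<noteq> v" "y \<noteq> v" using False \<open>x \<in> W\<close> \<open>y \<in> W\<close> by auto
        ultimately show "edg B x y" using g(5) by simp
      qed
      then show False using glue.IH W(1) unfolding noK5_def by blast
    qed
  qed
qed

lemma ball_chord4: "stacked_ball B \<Longrightarrow> chord4 B"
proof (induction B rule: stacked_ball.induct)
  case (single T)
  show ?case unfolding chord4_def
  proof (intro allI impI)
    fix a b c d assume h: "distinct [a,b,c,d] \<and> edg {T} a b \<and> edg {T} b c \<and> edg {T} c d \<and> edg {T} d a"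
    then have "a \<in> T" "c \<in> T" "a \<noteq> c" unfolding edg_def by auto
    then show "edg {T} a c \<or> edg {T} b d" by (meson edgI insertI1)
  qed
next
  case (glue B t v)
  note g = glue_facts[OF glue(2,3)]
  let ?B = "insert (insert v t) B"
  have up: "edg ?B x y" if "edg B x y" for x y using that unfolding edg_insert by blast
  have gv: "w \<in> t" if "edg ?B w v" for w using g(4) edg_sym[OF that] by blast
  show ?case unfolding chord4_def
  proof (intro allI impI)
    fix a b c d assume h: "distinct [a,b,c,d] \<and> edg ?B a b \<and> edg ?B b c \<and> edg ?B c d \<and> edg ?B d a"
    show "edg ?B a c \<or> edg ?B b d"
    proof (cases "v \<in> {a,b,c,d}")
      case False
      then have "edg B a b" "edg B b c" "edg B c d" "edg B d a" using h g(5) by auto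
      then have "edg B a c \<or> edg B b d" using glue.IH h unfolding chord4_def by blast
      then show ?thesis using up by blast
    next
      case True
      then consider "v = a" | "v = b" | "v = c" | "v = d" by blast
      then show ?thesis
      proof cases
        case 1 then have "b \<in> t" "d \<in> t" using h g(4) gv by auto
        then show ?thesis using g(3) h up by auto
      next
        case 2 then have "a \<in> t" "c \<in> t" using h g(4) gv by auto
        then show ?thesis using g(3) h up by auto
      next
        case 3 then have "b \<in> t" "d \<in> t" using h g(4) gv by auto
        then show ?thesis using g(3) h up by auto
      next
        case 4 then have "a \<in> t" "c \<in> t" using h g(4) gv by auto
        then show ?thesis using g(3) h up by auto
      qed
    qed
  qed
qed



definition E2 :: "nat set set \<Rightarrow> bool" where
  "E2 X \<longleftrightarrow> (\<forall>x y s1 s2 s3. x \<noteq> y \<and> s1 \<in> X \<and> s2 \<in> X \<and> s3 \<in> X \<and> s1 \<noteq> s2 \<and> s1 \<noteq> s3 \<and> s2 \<noteq> s3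
     \<and> {x,y} \<subseteq> s1 \<and> {x,y} \<subseteq> s2 \<and> {x,y} \<subseteq> s3 \<longrightarrow> False)"

definition Fs :: "nat set set \<Rightarrow> nat \<Rightarrow> nat \<Rightarrow> nat set set" where
  "Fs X x y = {s\<in>X. x \<in> s \<and> y \<in> s}"

lemma ball_finite: "stacked_ball B \<Longrightarrow> finite B"
  by (induction B rule: stacked_ball.induct) auto

lemma bd_finite: assumes "stacked_ball B" shows "finite (boundary_complex B)"
proof -
  have "boundary_complex B \<subseteq> (\<Union>T\<in>B. Pow T)" by (auto simp: boundary_complex_def)
  moreover have "finite (\<Union>T\<in>B. Pow T)"
  proof (rule finite_UN_I)
    show "finite B" using assms by (rule ball_finite)
    fix T assume "T \<in> B"
    then have "card T = 4" using ball_card assms by blast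
    then show "finite (Pow T)" by (metis card.infinite finite_Pow_iff zero_neq_numeral)
  qed
  ultimately show ?thesis by (rule finite_subset)
qed

lemma E2_of_card:
  assumes fin: "finite X" and c: "\<And>x y. x \<noteq> y \<Longrightarrow> card (Fs X x y) \<le> 2"
  shows "E2 X"
  unfolding E2_def
proof (intro allI impI)
  fix x y s1 s2 s3
  assume h: "x \<noteq> y \<and> s1 \<in> X \<and> s2 \<in> X \<and> s3 \<in> X \<and> s1 \<noteq> s2 \<and> s1 \<noteq> s3 \<and> s2 \<noteq> s3
     \<and> {x,y} \<subseteq> s1 \<and> {x,y} \<subseteq> s2 \<and> {x,y} \<subseteq> s3"
  then have "{s1,s2,s3} \<subseteq> Fs X x y" by (auto simp: Fs_def)
  moreover have "finite (Fs X x y)" using fin by (simp add: Fs_def)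
  ultimately have "card {s1,s2,s3} \<le> card (Fs X x y)" by (rule card_mono[rotated])
  moreover have "card {s1,s2,s3} = 3" using h by simp
  ultimately show False using c h by fastforce
qed

lemma tri_other: assumes "card s = 3" "s \<subseteq> T" "card T = 4"
  shows "\<exists>z. z \<in> T \<and> z \<notin> s \<and> s = T - {z}"
proof -
  have fT: "finite T" using assms(3) by (metis card.infinite zero_neq_numeral)
  have "card (T - s) = 1" using assms fT by (simp add: card_Diff_subset finite_subset)
  then obtain z where z: "T - s = {z}" by (meson card_1_singletonE)
  then have "s = T - {z}" using assms(2) by blast
  then show ?thesis using z by blast
qed

lemma bd_Fs_card: "stacked_ball B \<Longrightarrow> x \<noteq> y \<Longrightarrow> card (Fs (boundary_complex B) x y) \<le> 2"
proof (induction B arbitrary: x y rule: stacked_ball.induct)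
  case (single T)
  have fT: "finite T" using single by (metis card.infinite zero_neq_numeral)
  show ?case
  proof (cases "x \<in> T \<and> y \<in> T")
    case True
    have "Fs (boundary_complex {T}) x y \<subseteq> (\<lambda>z. T - {z}) ` (T - {x,y})"
    proof
      fix s assume "s \<in> Fs (boundary_complex {T}) x y"
      then have s: "card s = 3" "s \<subseteq> T" "x \<in> s" "y \<in> s" using single by (auto simp: Fs_def bd_single)
      obtain z where "z \<in> T" "z \<notin> s" "s = T - {z}" using tri_other[OF s(1,2) single.hyps] by blast
      then show "s \<in> (\<lambda>z. T - {z}) ` (T - {x,y})" using s by blast
    qed
    moreover have "card ((\<lambda>z. T - {z}) ` (T - {x,y})) \<le> card (T - {x,y})"
      using fT by (intro card_image_le) simp
    moreover have "card (T - {x,y}) = 2" using True single.prems single.hyps fT by (subst card_Diff_subset) auto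
    moreover have "finite ((\<lambda>z. T - {z}) ` (T - {x,y}))" using fT by simp
    ultimately show ?thesis by (metis card_mono order_trans)
  next
    case False
    then have "Fs (boundary_complex {T}) x y = {}" using single by (auto simp: Fs_def bd_single)
    then show ?thesis by simp
  qed
next
  case (glue B t v)
  note g = glue_facts[OF glue(2,3)]
  have ft: "finite t" using g(1) by (metis card.infinite zero_neq_numeral)
  note bg = bd_glue[OF glue(3,2)]
  let ?B = "insert (insert v t) B"
  have vold: "v \<notin> s" if "s \<in> boundary_complex B" for s using bd_sub[OF that] glue(3) by blast
  have vcase: "card (Fs (boundary_complex ?B) v w) \<le> 2" if "w \<noteq> v" for w
  proof (cases "w \<in> t")
    case True
    have "Fs (boundary_complex ?B) v w \<subseteq> (\<lambda>z. {v,w,z}) ` (t - {w})"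
    proof
      fix s assume "s \<in> Fs (boundary_complex ?B) v w"
      then have s: "s \<in> boundary_complex ?B" "v \<in> s" "w \<in> s" by (auto simp: Fs_def)
      then have "\<exists>p q. p \<in> t \<and> q \<in> t \<and> p \<noteq> q \<and> s = {v,p,q}" using vold unfolding bg by blast
      then obtain p q where pq: "p \<in> t" "q \<in> t" "p \<noteq> q" "s = {v,p,q}" by blast
      then have "w = p \<or> w = q" using s that by blast
      then show "s \<in> (\<lambda>z. {v,w,z}) ` (t - {w})" using pq by (auto simp: insert_commute)
    qed
    moreover have "card ((\<lambda>z. {v,w,z}) ` (t - {w})) \<le> card (t - {w})" using ft by (intro card_image_le) simp
    moreover have "card (t - {w}) = 2" using True g(1) by simp
    moreover have "finite ((\<lambda>z. {v,w,z}) ` (t - {w}))" using ft by simp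
    ultimately show ?thesis by (metis card_mono order_trans)
  next
    case False
    have "Fs (boundary_complex ?B) v w = {}"
    proof (rule ccontr)
      assume "Fs (boundary_complex ?B) v w \<noteq> {}"
      then obtain s where s: "s \<in> boundary_complex ?B" "v \<in> s" "w \<in> s" by (auto simp: Fs_def)
      then have "\<exists>p q. p \<in> t \<and> q \<in> t \<and> p \<noteq> q \<and> s = {v,p,q}" using vold unfolding bg by blast
      then show False using s False that by blast
    qed
    then show ?thesis by simp
  qed
  have fsym: "Fs X a b = Fs X b a" for X a b by (auto simp: Fs_def)
  show ?case
  proof (cases "x = v \<or> y = v")
    case True
    then show ?thesis using vcase glue.prems fsym by metis
  next
    case False
    have fin: "finite (Fs (boundary_complex B) x y)" using bd_finite[OF glue(1)] by (simp add: Fs_def)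
    have IH: "card (Fs (boundary_complex B) x y) \<le> 2" using glue.IH glue.prems by blast
    have sub: "Fs (boundary_complex ?B) x y \<subseteq> (Fs (boundary_complex B) x y - {t}) \<union> (if x \<in> t \<and> y \<in> t then {{v,x,y}} else {})"
    proof
      fix s assume "s \<in> Fs (boundary_complex ?B) x y"
      then have s: "s \<in> boundary_complex ?B" "x \<in> s" "y \<in> s" by (auto simp: Fs_def)
      show "s \<in> (Fs (boundary_complex B) x y - {t}) \<union> (if x \<in> t \<and> y \<in> t then {{v,x,y}} else {})"
      proof (cases "s \<in> boundary_complex B - {t}")
        case True then show ?thesis using s by (auto simp: Fs_def)
      next
        case nb: False
        then have "\<exists>p q. p \<in> t \<and> q \<in> t \<and> p \<noteq> q \<and> s = {v,p,q}" using s(1) unfolding bg by blast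
        then obtain p q where pq: "p \<in> t" "q \<in> t" "p \<noteq> q" "s = {v,p,q}" by blast
        then have "{x,y} = {p,q}" using s False glue.prems by auto
        then have "s = {v,x,y}" "x \<in> t" "y \<in> t" using pq by auto
        then show ?thesis by simp
      qed
    qed
    show ?thesis
    proof (cases "x \<in> t \<and> y \<in> t")
      case True
      then have tin: "t \<in> Fs (boundary_complex B) x y" using glue(2) by (simp add: Fs_def)
      have "card (Fs (boundary_complex ?B) x y) \<le> card ((Fs (boundary_complex B) x y - {t}) \<union> {{v,x,y}})"
        using sub True fin by (intro card_mono) auto
      also have "\<dots> \<le> card (Fs (boundary_complex B) x y - {t}) + 1"
        using card_Un_le[of "Fs (boundary_complex B) x y - {t}" "{{v,x,y}}"] by simp
      also have "\<dots> = card (Fs (boundary_complex B) x y)" using tin fin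
        by (simp add: card_Diff_singleton) (metis Suc_pred card_gt_0_iff empty_iff)
      finally show ?thesis using IH by simp
    next
      case False
      have "card (Fs (boundary_complex ?B) x y) \<le> card (Fs (boundary_complex B) x y - {t})"
        using sub False fin by (intro card_mono) auto
      also have "\<dots> \<le> card (Fs (boundary_complex B) x y)" using fin by (simp add: card_Diff1_le)
      finally show ?thesis using IH by simp
    qed
  qed
qed

lemma bd_E2: "stacked_ball B \<Longrightarrow> E2 (boundary_complex B)"
  by (rule E2_of_card[OF bd_finite]) (auto intro: bd_Fs_card)



lemma bd_verts: assumes "stacked_ball B" shows "\<Union>(boundary_complex B) = \<Union>B"
proof
  show "\<Union>(boundary_complex B) \<subseteq> \<Union>B" using bd_sub by blast
  show "\<Union>B \<subseteq> \<Union>(boundary_complex B)"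
  proof
    fix x assume "x \<in> \<Union>B"
    then obtain T where T: "T \<in> B" "x \<in> T" by blast
    have "card T = 4" using ball_card[OF assms T(1)] .
    then have "card (T - {x}) = 3" using T by simp
    then obtain y where "y \<in> T" "y \<noteq> x" by (metis Diff_iff card.empty insertI1 zero_neq_numeral ex_in_conv)
    then have "edg B x y" using edgI[OF _ T(1) T(2)] by metis
    then have "edg (boundary_complex B) x y" using edg_bd_eq[OF assms] by simp
    then show "x \<in> \<Union>(boundary_complex B)" using edg_vert by blast
  qed
qed

lemma iso_refl: "complex_iso X X"
  unfolding complex_iso_def by (intro exI[of _ id]) auto

lemma iso_sym: assumes "complex_iso X Y" shows "complex_iso Y X"
proof -
  obtain f where f: "bij_betw f (\<Union>X) (\<Union>Y)" "(\<lambda>s. f ` s) ` X = Y" using assms unfolding complex_iso_def by blast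
  let ?g = "inv_into (\<Union>X) f"
  have "bij_betw ?g (\<Union>Y) (\<Union>X)" using f(1) by (rule bij_betw_inv_into)
  moreover have "(\<lambda>s. ?g ` s) ` Y = X"
  proof -
    have inj: "inj_on f (\<Union>X)" using f(1) bij_betw_def by blast
    have "(\<lambda>s. ?g ` s) ` Y = (\<lambda>s. ?g ` f ` s) ` X" unfolding f(2)[symmetric] by (rule image_image)
    also have "\<dots> = (\<lambda>s. s) ` X"
    proof (rule image_cong[OF refl])
      fix s assume "s \<in> X" then have "s \<subseteq> \<Union>X" by blast
      then show "?g ` f ` s = s" using inj by simp
    qed
    also have "\<dots> = X" by simp
    finally show ?thesis .
  qed
  ultimately show ?thesis unfolding complex_iso_def by blast
qed

lemma iso_trans: assumes "complex_iso X Y" "complex_iso Y Z" shows "complex_iso X Z"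
proof -
  obtain f where f: "bij_betw f (\<Union>X) (\<Union>Y)" "(\<lambda>s. f ` s) ` X = Y" using assms(1) unfolding complex_iso_def by blast
  obtain g where g: "bij_betw g (\<Union>Y) (\<Union>Z)" "(\<lambda>s. g ` s) ` Y = Z" using assms(2) unfolding complex_iso_def by blast
  have "bij_betw (g \<circ> f) (\<Union>X) (\<Union>Z)" using f(1) g(1) by (rule bij_betw_trans)
  moreover have "(\<lambda>s. (g \<circ> f) ` s) ` X = Z" using f(2) g(2) by (auto simp: image_comp[symmetric])
  ultimately show ?thesis unfolding complex_iso_def by blast
qed

lemma iso_edg:
  assumes f: "bij_betw f (\<Union>X) (\<Union>Y)" "(\<lambda>s. f ` s) ` X = Y"
  shows "edg X x y \<Longrightarrow> edg Y (f x) (f y)"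
    and "x \<in> \<Union>X \<Longrightarrow> y \<in> \<Union>X \<Longrightarrow> edg Y (f x) (f y) \<Longrightarrow> edg X x y"
proof -
  have inj: "inj_on f (\<Union>X)" using f(1) bij_betw_def by blast
  show "edg X x y \<Longrightarrow> edg Y (f x) (f y)"
  proof -
    assume "edg X x y"
    then obtain s where s: "x \<noteq> y" "s \<in> X" "x \<in> s" "y \<in> s" unfolding edg_def by blast
    have "f x \<noteq> f y" using s inj by (meson UnionI inj_on_contraD)
    moreover have "f ` s \<in> Y" using f(2) s by blast
    ultimately show "edg Y (f x) (f y)" using s by (meson edgI imageI)
  qed
  show "x \<in> \<Union>X \<Longrightarrow> y \<in> \<Union>X \<Longrightarrow> edg Y (f x) (f y) \<Longrightarrow> edg X x y"
  proof -
    assume xy: "x \<in> \<Union>X" "y \<in> \<Union>X" "edg Y (f x) (f y)"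
    then obtain s' where s': "f x \<noteq> f y" "s' \<in> Y" "f x \<in> s'" "f y \<in> s'" unfolding edg_def by blast
    then obtain s where s: "s \<in> X" "s' = f ` s" using f(2) by blast
    have "x \<in> s" using s s' xy inj unfolding inj_on_def by blast
    moreover have "y \<in> s" using s s' xy inj unfolding inj_on_def by blast
    moreover have "x \<noteq> y" using s' by blast
    ultimately show "edg X x y" using s by (meson edgI)
  qed
qed

lemma cliq_verts: "cliq X W \<Longrightarrow> card W \<ge> 2 \<Longrightarrow> W \<subseteq> \<Union>X"
proof
  fix w assume c: "cliq X W" "card W \<ge> 2" "w \<in> W"
  have "card (W - {w}) \<ge> 1" using c by (simp add: card_Diff_singleton_if)
  then obtain y where "y \<in> W" "y \<noteq> w" by (metis Diff_iff card.empty ex_in_conv insertI1 not_one_le_zero)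
  then have "edg X w y" using cliqD[OF c(1) c(3)] by simp
  then show "w \<in> \<Union>X" using edg_vert by blast
qed

lemma iso_noK5: assumes "complex_iso X Y" "noK5 Y" shows "noK5 X"
proof -
  obtain f where f: "bij_betw f (\<Union>X) (\<Union>Y)" "(\<lambda>s. f ` s) ` X = Y" using assms(1) unfolding complex_iso_def by blast
  have inj: "inj_on f (\<Union>X)" using f(1) bij_betw_def by blast
  show ?thesis unfolding noK5_def
  proof (intro allI impI notI)
    fix W assume W: "card W = 5" "cliq X W"
    have sub: "W \<subseteq> \<Union>X" using cliq_verts[OF W(2)] W(1) by simp
    have "card (f ` W) = 5" using W(1) card_image[OF inj_on_subset[OF inj sub]] by simp
    moreover have "cliq Y (f ` W)" unfolding cliq_def
    proof (intro ballI impI)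
      fix a b assume "a \<in> f ` W" "b \<in> f ` W" "a \<noteq> b"
      then obtain x y where "x \<in> W" "y \<in> W" "a = f x" "b = f y" by blast
      then show "edg Y a b" using cliqD[OF W(2)] iso_edg(1)[OF f] \<open>a \<noteq> b\<close> by blast
    qed
    ultimately show False using assms(2) unfolding noK5_def by blast
  qed
qed

lemma iso_chord4: assumes "complex_iso X Y" "chord4 Y" shows "chord4 X"
proof -
  obtain f where f: "bij_betw f (\<Union>X) (\<Union>Y)" "(\<lambda>s. f ` s) ` X = Y" using assms(1) unfolding complex_iso_def by blast
  have inj: "inj_on f (\<Union>X)" using f(1) bij_betw_def by blast
  show ?thesis unfolding chord4_def
  proof (intro allI impI)
    fix a b c d assume h: "distinct [a,b,c,d] \<and> edg X a b \<and> edg X b c \<and> edg X c d \<and> edg X d a"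
    then have V: "a \<in> \<Union>X" "b \<in> \<Union>X" "c \<in> \<Union>X" "d \<in> \<Union>X" using edg_vert by blast+
    have ne: "\<And>p q. p \<in> \<Union>X \<Longrightarrow> q \<in> \<Union>X \<Longrightarrow> p \<noteq> q \<Longrightarrow> f p \<noteq> f q" using inj by (meson inj_on_contraD)
    have "distinct [f a, f b, f c, f d]" using h V ne by simp
    moreover have "edg Y (f a) (f b) \<and> edg Y (f b) (f c) \<and> edg Y (f c) (f d) \<and> edg Y (f d) (f a)"
      using h iso_edg(1)[OF f] by blast
    ultimately have "edg Y (f a) (f c) \<or> edg Y (f b) (f d)" using assms(2) unfolding chord4_def by blast
    then show "edg X a c \<or> edg X b d" using iso_edg(2)[OF f] V by blast
  qed
qed

lemma E2D: "E2 X \<Longrightarrow> x \<noteq> y \<Longrightarrow> s1 \<in> X \<Longrightarrow> s2 \<in> X \<Longrightarrow> s3 \<in> X \<Longrightarrow> s1 \<noteq> s2 \<Longrightarrow> s1 \<noteq> s3 \<Longrightarrow> s2 \<noteq> s3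
     \<Longrightarrow> {x,y} \<subseteq> s1 \<Longrightarrow> {x,y} \<subseteq> s2 \<Longrightarrow> {x,y} \<subseteq> s3 \<Longrightarrow> False"
  unfolding E2_def by blast

lemma iso_E2: assumes "complex_iso X Y" "E2 Y" shows "E2 X"
proof -
  obtain f where f: "bij_betw f (\<Union>X) (\<Union>Y)" "(\<lambda>s. f ` s) ` X = Y" using assms(1) unfolding complex_iso_def by blast
  have inj: "inj_on f (\<Union>X)" using f(1) bij_betw_def by blast
  show ?thesis unfolding E2_def
  proof (intro allI impI)
    fix x y s1 s2 s3
    assume h: "x \<noteq> y \<and> s1 \<in> X \<and> s2 \<in> X \<and> s3 \<in> X \<and> s1 \<noteq> s2 \<and> s1 \<noteq> s3 \<and> s2 \<noteq> s3
     \<and> {x,y} \<subseteq> s1 \<and> {x,y} \<subseteq> s2 \<and> {x,y} \<subseteq> s3"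
    have sub: "s1 \<subseteq> \<Union>X" "s2 \<subseteq> \<Union>X" "s3 \<subseteq> \<Union>X" using h by auto
    have ne1: "f ` s1 \<noteq> f ` s2" using h inj_on_image_eq_iff[OF inj sub(1) sub(2)] by simp
    have ne2: "f ` s1 \<noteq> f ` s3" using h inj_on_image_eq_iff[OF inj sub(1) sub(3)] by simp
    have ne3: "f ` s2 \<noteq> f ` s3" using h inj_on_image_eq_iff[OF inj sub(2) sub(3)] by simp
    have xy: "x \<in> \<Union>X" "y \<in> \<Union>X" using h by auto
    have fxy: "f x \<noteq> f y" using h inj_on_contraD[OF inj _ xy] by blast
    have Y: "f ` s1 \<in> Y" "f ` s2 \<in> Y" "f ` s3 \<in> Y" using f(2) h by blast+
    have S: "{f x, f y} \<subseteq> f ` s1" "{f x, f y} \<subseteq> f ` s2" "{f x, f y} \<subseteq> f ` s3" using h by auto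
    show False by (rule E2D[OF assms(2) fxy Y ne1 ne2 ne3 S])
  qed
qed

definition QQ :: "nat set set \<Rightarrow> bool" where
  "QQ X \<longleftrightarrow> (\<exists>W. card W = 4 \<and> cliq X W \<and> (\<forall>s\<in>X. \<not> s \<subseteq> W))"

lemma iso_QQ: assumes "complex_iso X Y" "QQ X" shows "QQ Y"
proof -
  obtain f where f: "bij_betw f (\<Union>X) (\<Union>Y)" "(\<lambda>s. f ` s) ` X = Y" using assms(1) unfolding complex_iso_def by blast
  have inj: "inj_on f (\<Union>X)" using f(1) bij_betw_def by blast
  obtain W where W: "card W = 4" "cliq X W" "\<forall>s\<in>X. \<not> s \<subseteq> W" using assms(2) unfolding QQ_def by blast
  have sub: "W \<subseteq> \<Union>X" using cliq_verts[OF W(2)] W(1) by simp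
  have "card (f ` W) = 4" using W(1) card_image[OF inj_on_subset[OF inj sub]] by simp
  moreover have "cliq Y (f ` W)" unfolding cliq_def
  proof (intro ballI impI)
    fix a b assume "a \<in> f ` W" "b \<in> f ` W" "a \<noteq> b"
    then obtain x y where "x \<in> W" "y \<in> W" "a = f x" "b = f y" by blast
    then show "edg Y a b" using cliqD[OF W(2)] iso_edg(1)[OF f] \<open>a \<noteq> b\<close> by blast
  qed
  moreover have "\<forall>s'\<in>Y. \<not> s' \<subseteq> f ` W"
  proof (intro ballI notI)
    fix s' assume "s' \<in> Y" "s' \<subseteq> f ` W"
    then obtain s where s: "s \<in> X" "s' = f ` s" using f(2) by blast
    have "s \<subseteq> W"
    proof
      fix x assume "x \<in> s"
      then have "f x \<in> f ` W" using s \<open>s' \<subseteq> f ` W\<close> by blast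
      then obtain w where "w \<in> W" "f x = f w" by blast
      then show "x \<in> W" using inj sub \<open>x \<in> s\<close> s(1) unfolding inj_on_def by blast
    qed
    then show False using W(3) s(1) by blast
  qed
  ultimately show ?thesis unfolding QQ_def by blast
qed

definition good :: "nat set set \<Rightarrow> bool" where
  "good X \<longleftrightarrow> noK5 X \<and> chord4 X \<and> E2 X"

lemma ball_good: "stacked_ball B \<Longrightarrow> good (boundary_complex B)"
proof -
  assume b: "stacked_ball B"
  have "noK5 (boundary_complex B)" using ball_noK5[OF b] edg_bd_eq[OF b]
    unfolding noK5_def cliq_def by simp
  moreover have "chord4 (boundary_complex B)" using ball_chord4[OF b] edg_bd_eq[OF b]
    unfolding chord4_def by simp
  ultimately show ?thesis using bd_E2[OF b] unfolding good_def by blast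
qed

lemma sphere_good: "stacked_sphere S \<Longrightarrow> good S"
proof -
  assume "stacked_sphere S"
  then obtain B where B: "stacked_ball B" "complex_iso S (boundary_complex B)" unfolding stacked_sphere_def by blast
  have "good (boundary_complex B)" using B(1) by (rule ball_good)
  then show "good S" unfolding good_def using iso_noK5[OF B(2)] iso_chord4[OF B(2)] iso_E2[OF B(2)] by blast
qed

lemma sphere_iso: "stacked_sphere S \<Longrightarrow> complex_iso S' S \<Longrightarrow> stacked_sphere S'"
  unfolding stacked_sphere_def using iso_trans by blast



lemma K5_false:
  assumes "noK5 X" "distinct [a,b,c,d,e]"
    "edg X a b" "edg X a c" "edg X a d" "edg X a e" "edg X b c" "edg X b d" "edg X b e"
    "edg X c d" "edg X c e" "edg X d e"
  shows False
proof -
  have s: "\<And>x y. edg X x y \<Longrightarrow> edg X y x" by (rule edg_sym)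
  have "cliq X {a,b,c,d,e}" unfolding cliq_def using assms(3-12) s by blast
  moreover have "card {a,b,c,d,e} = 5" using assms(2) by simp
  ultimately show False using assms(1) unfolding noK5_def by blast
qed

lemma chord4D: "chord4 X \<Longrightarrow> distinct [a,b,c,d] \<Longrightarrow> edg X a b \<Longrightarrow> edg X b c \<Longrightarrow> edg X c d \<Longrightarrow> edg X d a
   \<Longrightarrow> edg X a c \<or> edg X b d"
  unfolding chord4_def by blast

lemma card4_two: assumes "card W = 4" "a \<in> W" "b \<in> W" "a \<noteq> b"
  obtains y z where "W = {a,b,y,z}" "distinct [a,b,y,z]"
proof -
  have "card (W - {a,b}) = 2" using assms by (simp add: card_Diff_subset card.infinite)
  then obtain y z where yz: "W - {a,b} = {y,z}" "y \<noteq> z" by (meson card_2_iff)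
  then have "W = {a,b,y,z}" using assms(2,3) by blast
  moreover have "distinct [a,b,y,z]" using yz assms(4) by (simp; blast)
  ultimately show ?thesis using that by blast
qed

lemma flip_QQ:
  assumes gK: "good K" and gL: "good L" and fl: "edge_flip K L"
  shows "QQ K \<longleftrightarrow> QQ L"
proof -
  obtain a b c d where dis: "distinct [a,b,c,d]" and abc: "{a,b,c} \<in> K" and abd: "{a,b,d} \<in> K"
    and ncd: "\<not> (\<exists>s\<in>K. {c,d} \<subseteq> s)" and L: "L = (K - {{a,b,c},{a,b,d}}) \<union> {{a,c,d},{b,c,d}}"
    using fl unfolding edge_flip_def by blast
  have n5K: "noK5 K" and c4K: "chord4 K" and e2K: "E2 K" using gK unfolding good_def by auto
  have n5L: "noK5 L" and c4L: "chord4 L" using gL unfolding good_def by auto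
  have acd: "{a,c,d} \<in> L" and bcd: "{b,c,d} \<in> L" using L by auto
  have F1: "edg K x y" if h: "edg L x y" "\<not> (x = c \<and> y = d)" "\<not> (x = d \<and> y = c)" for x y
  proof -
    obtain s where s: "x \<noteq> y" "s \<in> L" "x \<in> s" "y \<in> s" using h(1) unfolding edg_def by blast
    show ?thesis
    proof (cases "s \<in> K")
      case True then show ?thesis using s edgI by metis
    next
      case False
      then have "s = {a,c,d} \<or> s = {b,c,d}" using s(2) L by blast
      then have "({x,y} \<subseteq> {a,b,c}) \<or> ({x,y} \<subseteq> {a,b,d})" using s h(2,3) by (elim disjE) auto
      then show ?thesis using s(1) abc abd by (meson edgI insert_subset)
    qed
  qed
  have F2: "edg L x y" if h: "edg K x y" "\<not> (x = a \<and> y = b)" "\<not> (x = b \<and> y = a)" for x y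
  proof -
    obtain s where s: "x \<noteq> y" "s \<in> K" "x \<in> s" "y \<in> s" using h(1) unfolding edg_def by blast
    show ?thesis
    proof (cases "s \<in> L")
      case True then show ?thesis using s edgI by metis
    next
      case False
      then have "s = {a,b,c} \<or> s = {a,b,d}" using s(2) L by blast
      then have "({x,y} \<subseteq> {a,c,d}) \<or> ({x,y} \<subseteq> {b,c,d})" using s h(2,3) by (elim disjE) auto
      then show ?thesis using s(1) acd bcd by (meson edgI insert_subset)
    qed
  qed
  have F3: "\<not> edg K c d" using ncd unfolding edg_def by blast
  have F4: "\<not> edg L a b"
  proof
    assume "edg L a b"
    then obtain s where s: "s \<in> L" "a \<in> s" "b \<in> s" unfolding edg_def by blast
    have "s \<noteq> {a,c,d}" "s \<noteq> {b,c,d}" using s dis by auto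
    then have sK: "s \<in> K" and n1: "s \<noteq> {a,b,c}" and n2: "s \<noteq> {a,b,d}" using s L by auto
    have n3: "{a,b,c} \<noteq> {a,b,d}" using dis by auto
    have ab: "a \<noteq> b" using dis by simp
    have sub: "{a,b} \<subseteq> s" "{a,b} \<subseteq> {a,b,c}" "{a,b} \<subseteq> {a,b,d}" using s by auto
    show False by (rule E2D[OF e2K ab sK abc abd n1 n2 n3 sub])
  qed
  have d: "a \<noteq> b" "a \<noteq> c" "a \<noteq> d" "b \<noteq> c" "b \<noteq> d" "c \<noteq> d" using dis by auto
  have EL: "edg L a c" "edg L a d" "edg L c d" "edg L b c" "edg L b d"
    using acd bcd d by (meson edgI insertI1 insertI2)+
  have EK: "edg K a b" "edg K a c" "edg K b c" "edg K a d" "edg K b d"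
    using abc abd d by (meson edgI insertI1 insertI2)+
  show ?thesis
  proof
    assume "QQ K"
    then obtain W where W: "card W = 4" "cliq K W" "\<forall>s\<in>K. \<not> s \<subseteq> W" unfolding QQ_def by blast
    show "QQ L"
    proof (cases "a \<in> W \<and> b \<in> W")
      case False
      have "cliq L W" unfolding cliq_def
      proof (intro ballI impI)
        fix x y assume "x \<in> W" "y \<in> W" "x \<noteq> y"
        then have "edg K x y" by (rule cliqD[OF W(2)])
        moreover have "\<not> (x = a \<and> y = b)" "\<not> (x = b \<and> y = a)" using False \<open>x \<in> W\<close> \<open>y \<in> W\<close> by auto
        ultimately show "edg L x y" using F2 by blast
      qed
      moreover have "\<forall>s\<in>L. \<not> s \<subseteq> W"
      proof (intro ballI notI)
        fix s assume "s \<in> L" "s \<subseteq> W"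
        show False
        proof (cases "s \<in> K")
          case True then show False using W(3) \<open>s \<subseteq> W\<close> by blast
        next
          case False
          then have "s = {a,c,d} \<or> s = {b,c,d}" using \<open>s \<in> L\<close> L by blast
          then have "c \<in> W" "d \<in> W" using \<open>s \<subseteq> W\<close> by auto
          then show False using cliqD[OF W(2)] F3 d by blast
        qed
      qed
      ultimately show ?thesis using W(1) unfolding QQ_def by blast
    next
      case True
      then obtain y z where yz: "W = {a,b,y,z}" and dyz: "distinct [a,b,y,z]" using card4_two W(1) d(1) by metis
      have "c \<notin> W"
      proof
        assume "c \<in> W" then have "{a,b,c} \<subseteq> W" using True by simp
        then show False using W(3) abc by blast
      qed
      have "d \<notin> W"
      proof
        assume "d \<in> W" then have "{a,b,d} \<subseteq> W" using True by simp
        then show False using W(3) abd by blast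
      qed
      have yW: "y \<in> W" "z \<in> W" using yz by auto
      have yzd: "y \<noteq> c" "z \<noteq> c" "y \<noteq> d" "z \<noteq> d" using \<open>c \<notin> W\<close> \<open>d \<notin> W\<close> yW by auto
      have yza: "y \<noteq> a" "z \<noteq> a" "y \<noteq> b" "z \<noteq> b" "y \<noteq> z" using dyz by auto
      have Wy: "edg K a y" "edg K a z" "edg K b y" "edg K b z" "edg K y z"
        using cliqD[OF W(2)] yW True yza d by metis+
      have cy: "edg K c w" if w: "w = y \<or> w = z" for w
      proof -
        have wn: "w \<noteq> a" "w \<noteq> b" "w \<noteq> c" "w \<noteq> d" using w yzd yza by auto
        have dw: "distinct [a,c,b,w]" using wn d by simp
        have ebw: "edg K b w" "edg K a w" using w Wy by auto
        have "edg L b w" by (rule F2[OF ebw(1)]) (use wn d in auto)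
        moreover have "edg L a w" by (rule F2[OF ebw(2)]) (use wn d in auto)
        moreover have "edg L c b" using EL edg_sym by blast
        ultimately have "edg L a b \<or> edg L c w" using chord4D[OF c4L dw] EL edg_sym by blast
        then have "edg L c w" using F4 by blast
        then show "edg K c w" by (rule F1) (use wn d in auto)
      qed
      have "distinct [a,b,c,y,z]" using yzd yza d by simp
      then show ?thesis using K5_false[OF n5K, of a b c y z] EK Wy cy by blast
    qed
  next
    assume "QQ L"
    then obtain W where W: "card W = 4" "cliq L W" "\<forall>s\<in>L. \<not> s \<subseteq> W" unfolding QQ_def by blast
    show "QQ K"
    proof (cases "c \<in> W \<and> d \<in> W")
      case False
      have "cliq K W" unfolding cliq_def
      proof (intro ballI impI)
        fix x y assume "x \<in> W" "y \<in> W" "x \<noteq> y"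
        then have "edg L x y" by (rule cliqD[OF W(2)])
        moreover have "\<not> (x = c \<and> y = d)" "\<not> (x = d \<and> y = c)" using False \<open>x \<in> W\<close> \<open>y \<in> W\<close> by auto
        ultimately show "edg K x y" using F1 by blast
      qed
      moreover have "\<forall>s\<in>K. \<not> s \<subseteq> W"
      proof (intro ballI notI)
        fix s assume "s \<in> K" "s \<subseteq> W"
        show False
        proof (cases "s \<in> L")
          case True then show False using W(3) \<open>s \<subseteq> W\<close> by blast
        next
          case False
          then have "s = {a,b,c} \<or> s = {a,b,d}" using \<open>s \<in> K\<close> L by blast
          then have "a \<in> W" "b \<in> W" using \<open>s \<subseteq> W\<close> by auto
          then show False using cliqD[OF W(2)] F4 d by blast
        qed
      qed
      ultimately show ?thesis using W(1) unfolding QQ_def by blast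
    next
      case True
      then obtain y z where yz: "W = {c,d,y,z}" and dyz: "distinct [c,d,y,z]" using card4_two W(1) d(6) by metis
      have "a \<notin> W"
      proof
        assume "a \<in> W" then have "{a,c,d} \<subseteq> W" using True by simp
        then show False using W(3) acd by blast
      qed
      have "b \<notin> W"
      proof
        assume "b \<in> W" then have "{b,c,d} \<subseteq> W" using True by simp
        then show False using W(3) bcd by blast
      qed
      have yW: "y \<in> W" "z \<in> W" using yz by auto
      have yzd: "y \<noteq> a" "z \<noteq> a" "y \<noteq> b" "z \<noteq> b" using \<open>a \<notin> W\<close> \<open>b \<notin> W\<close> yW by auto
      have yza: "y \<noteq> c" "z \<noteq> c" "y \<noteq> d" "z \<noteq> d" "y \<noteq> z" using dyz by auto
      have Wy: "edg L c y" "edg L c z" "edg L d y" "edg L d z" "edg L y z"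
        using cliqD[OF W(2)] yW True yza d by metis+
      have ay: "edg L a w" if w: "w = y \<or> w = z" for w
      proof -
        have wn: "w \<noteq> a" "w \<noteq> b" "w \<noteq> c" "w \<noteq> d" using w yzd yza by auto
        have dw: "distinct [c,a,d,w]" using wn d by simp
        have ebw: "edg L d w" "edg L c w" using w Wy by auto
        have "edg K d w" by (rule F1[OF ebw(1)]) (use wn d in auto)
        moreover have "edg K c w" by (rule F1[OF ebw(2)]) (use wn d in auto)
        moreover have "edg K c a" "edg K a d" using EK edg_sym by blast+
        ultimately have "edg K c d \<or> edg K a w" using chord4D[OF c4K dw] edg_sym by blast
        then have "edg K a w" using F3 by blast
        then show "edg L a w" by (rule F2) (use wn d in auto)
      qed
      have "distinct [c,d,a,y,z]" using yzd yza d by simp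
      moreover have "edg L c a" "edg L d a" using EL edg_sym by blast+
      ultimately show ?thesis using K5_false[OF n5L, of c d a y z] EL Wy ay by blast
    qed
  qed
qed



definition PB :: "nat \<Rightarrow> nat set set" where
  "PB m = (\<lambda>i. {i..i+3}) ` {..<m-3}"

lemma PB_mem: "T \<in> PB m \<longleftrightarrow> (\<exists>i. i + 3 < m \<and> T = {i..i+3})"
  unfolding PB_def by auto

lemma PB_verts: "4 \<le> m \<Longrightarrow> \<Union>(PB m) = {..<m}"
proof
  show "\<Union>(PB m) \<subseteq> {..<m}"
  proof
    fix x assume "x \<in> \<Union>(PB m)"
    then obtain T where "T \<in> PB m" "x \<in> T" by blast
    then obtain i where "i + 3 < m" "x \<in> {i..i+3}" unfolding PB_mem by blast
    then show "x \<in> {..<m}" by simp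
  qed
  assume m: "4 \<le> m"
  show "{..<m} \<subseteq> \<Union>(PB m)"
  proof
    fix x assume "x \<in> {..<m}"
    then have x: "x < m" by simp
    show "x \<in> \<Union>(PB m)"
    proof (cases "x + 3 < m")
      case True then have "{x..x+3} \<in> PB m" unfolding PB_mem by blast
      moreover have "x \<in> {x..x+3}" by simp
      ultimately show ?thesis by (rule UnionI)
    next
      case False then have "{m-4..m-1} \<in> PB m" using m unfolding PB_mem by (intro exI[of _ "m-4"]) auto
      moreover have "x \<in> {m-4..m-1}" using False x by auto
      ultimately show ?thesis by (rule UnionI)
    qed
  qed
qed

lemma PB_bd: assumes "T \<in> PB m" "s \<subseteq> T" "card s = 3" "\<And>i. {i..i+3} \<in> PB m \<Longrightarrow> s \<subseteq> {i..i+3} \<Longrightarrow> {i..i+3} = T"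
  shows "s \<in> boundary_complex (PB m)"
proof -
  have "\<exists>!T. T \<in> PB m \<and> s \<subseteq> T"
  proof (rule ex1I[of _ T])
    show "T \<in> PB m \<and> s \<subseteq> T" using assms(1,2) by simp
    fix T' assume T': "T' \<in> PB m \<and> s \<subseteq> T'"
    then obtain i where "T' = {i..i+3}" unfolding PB_mem by blast
    then show "T' = T" using assms(4) T' by simp
  qed
  then show ?thesis unfolding boundary_complex_def using assms(3) by simp
qed

lemma PB_ball: "4 \<le> m \<Longrightarrow> stacked_ball (PB m)"
proof (induction m rule: dec_induct)
  case base
  have "PB 4 = {{0..3}}" unfolding PB_def by auto
  then show ?case using stacked_ball.single[of "{0..3}"] by simp
next
  case (step m)
  have tb: "{m-3..m-1} \<in> boundary_complex (PB m)"
  proof (rule PB_bd)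
    show "{m-4..m-4+3} \<in> PB m" using step(1) unfolding PB_mem by auto
    show "{m-3..m-1} \<subseteq> {m-4..m-4+3}" using step(1) by auto
    show "card {m-3..m-1} = 3" using step(1) by simp
    fix i assume "{i..i+3} \<in> PB m" "{m-3..m-1} \<subseteq> {i..i+3}"
    then have "i + 3 < m" "m - 1 \<le> i + 3" using step(1) unfolding PB_mem
      by (auto simp: subset_eq)
    then have "i = m - 4" by linarith
    then show "{i..i+3} = {m-4..m-4+3}" by simp
  qed
  have mv: "m \<notin> \<Union>(PB m)" using PB_verts[OF step(1)] by auto
  have "PB (Suc m) = insert (insert m {m-3..m-1}) (PB m)"
  proof -
    have "insert m {m-3..m-1} = {m-3..m-3+3}" using step(1) by auto
    moreover have "{..<Suc m - 3} = insert (m-3) {..<m-3}" using step(1) by auto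
    ultimately show ?thesis unfolding PB_def by simp
  qed
  then show ?case using stacked_ball.glue[OF step(3) tb mv] by simp
qed



lemma bd_uniq: "s \<in> boundary_complex X \<Longrightarrow> T1 \<in> X \<Longrightarrow> T2 \<in> X \<Longrightarrow> s \<subseteq> T1 \<Longrightarrow> s \<subseteq> T2 \<Longrightarrow> T1 = T2"
  unfolding boundary_complex_def by blast

lemma four_eq: "{1..4::nat} = {1,2,3,4}" by auto

definition BQ :: "nat \<Rightarrow> nat set set" where
  "BQ n = insert (insert (n-1) {1,3,4}) (insert (insert (n-2) {1,2,4}) (PB (n-2)))"

lemma BQ_ball: assumes n: "8 \<le> n" shows "stacked_ball (BQ n)"
proof -
  have b1: "stacked_ball (PB (n-2))" using n by (intro PB_ball) simp
  have v1: "\<Union>(PB (n-2)) = {..<n-2}" using n by (intro PB_verts) simp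
  have T1: "{1..1+3} \<in> PB (n-2)" using n unfolding PB_mem by (intro exI[of _ 1]) simp
  have t1: "{1,2,4} \<in> boundary_complex (PB (n-2))"
  proof (rule PB_bd[OF T1])
    show "{1,2,4} \<subseteq> {1..1+3::nat}" by auto
    show "card {1,2,4::nat} = 3" by simp
    fix i assume "{i..i+3} \<in> PB (n-2)" "{1,2,4} \<subseteq> {i..i+3}"
    then have "i = 1" by auto
    then show "{i..i+3} = {1..1+3}" by simp
  qed
  have nv1: "n - 2 \<notin> \<Union>(PB (n-2))" using v1 by simp
  let ?B2 = "insert (insert (n-2) {1,2,4}) (PB (n-2))"
  have b2: "stacked_ball ?B2" using stacked_ball.glue[OF b1 t1 nv1] .
  have t2: "{1,3,4} \<in> boundary_complex ?B2"
    unfolding boundary_complex_def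
  proof (intro CollectI conjI)
    show "card {1,3,4::nat} = 3" by simp
    show "\<exists>!T. T \<in> ?B2 \<and> {1,3,4} \<subseteq> T"
    proof (rule ex1I[of _ "{1..1+3}"])
      show "{1..1+3} \<in> ?B2 \<and> {1,3,4} \<subseteq> {1..1+3::nat}" using T1 by auto
      fix T assume T: "T \<in> ?B2 \<and> {1,3,4} \<subseteq> T"
      have "n - 2 \<noteq> 3" using n by simp
      then have "(3::nat) \<notin> insert (n-2) {1,2,4}" by simp
      moreover have "(3::nat) \<in> T" using T by simp
      ultimately have "T \<noteq> insert (n-2) {1,2,4}" by blast
      then have "T \<in> PB (n-2)" using T by simp
      then obtain i where "T = {i..i+3}" unfolding PB_mem by blast
      then have "i = 1" using T by auto
      then show "T = {1..1+3}" using \<open>T = {i..i+3}\<close> by simp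
    qed
  qed
  have nv2: "n - 1 \<notin> \<Union>?B2" using v1 n by auto
  show ?thesis unfolding BQ_def using stacked_ball.glue[OF b2 t2 nv2] .
qed

lemma BQ_verts: assumes n: "8 \<le> n" shows "\<Union>(BQ n) = {..<n}"
proof -
  have v1: "\<Union>(PB (n-2)) = {..<n-2}" using n by (intro PB_verts) simp
  have "\<Union>(BQ n) = {..<n-2} \<union> {n-2,1,2,4} \<union> {n-1,1,3,4}" unfolding BQ_def using v1 by auto
  also have "\<dots> = {..<n}" using n by auto
  finally show ?thesis .
qed

lemma BQ_QQ: assumes n: "8 \<le> n" shows "QQ (boundary_complex (BQ n))"
proof -
  have b: "stacked_ball (BQ n)" using BQ_ball[OF n] .
  have T1: "{1..1+3} \<in> PB (n-2)" using n unfolding PB_mem by (intro exI[of _ 1]) simp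
  then have W: "{1,2,3,4} \<in> BQ n" unfolding BQ_def using four_eq by simp
  have T2: "{2..2+3} \<in> PB (n-2)" using n unfolding PB_mem by (intro exI[of _ 2]) simp
  then have W2: "{2..5} \<in> BQ n" unfolding BQ_def by simp
  have T0: "{0..0+3} \<in> PB (n-2)" using n unfolding PB_mem by (intro exI[of _ 0]) simp
  then have W0: "{0..3} \<in> BQ n" unfolding BQ_def by simp
  have W3: "insert (n-2) {1,2,4} \<in> BQ n" "insert (n-1) {1,3,4} \<in> BQ n" unfolding BQ_def by auto
  have "card {1,2,3,4::nat} = 4" by simp
  moreover have "cliq (boundary_complex (BQ n)) {1,2,3,4}" unfolding cliq_def
  proof (intro ballI impI)
    fix x y assume "x \<in> {1,2,3,4::nat}" "y \<in> {1,2,3,4::nat}" "x \<noteq> y"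
    then have "edg (BQ n) x y" using edgI[OF _ W] by blast
    then show "edg (boundary_complex (BQ n)) x y" using edg_bd_eq[OF b] by simp
  qed
  moreover have "\<forall>s\<in>boundary_complex (BQ n). \<not> s \<subseteq> {1,2,3,4}"
  proof (intro ballI notI)
    fix s assume s: "s \<in> boundary_complex (BQ n)" "s \<subseteq> {1,2,3,4}"
    have "card s = 3" using s(1) by (rule bd_card)
    then obtain z where z: "z \<in> {1,2,3,4::nat}" "s = {1,2,3,4} - {z}" using tri_other[OF _ s(2)] by force
    have ne: "n - 2 \<notin> {1,2,3,4::nat}" "n - 1 \<notin> {1,2,3,4::nat}" using n by auto
    from z(1) show False
    proof (elim insertE emptyE)
      assume "z = 1"
      then have "s \<subseteq> {2..5}" using z by auto
      moreover have "{2..5} \<noteq> {1,2,3,4::nat}" by auto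
      ultimately show False using bd_uniq[OF s(1) W W2 s(2)] by blast
    next
      assume "z = 2"
      then have "s \<subseteq> insert (n-1) {1,3,4}" using z by auto
      moreover have "insert (n-1) {1,3,4} \<noteq> {1,2,3,4::nat}" using ne by auto
      ultimately show False using bd_uniq[OF s(1) W W3(2) s(2)] by blast
    next
      assume "z = 3"
      then have "s \<subseteq> insert (n-2) {1,2,4}" using z by auto
      moreover have "insert (n-2) {1,2,4} \<noteq> {1,2,3,4::nat}" using ne by auto
      ultimately show False using bd_uniq[OF s(1) W W3(1) s(2)] by blast
    next
      assume "z = 4"
      then have "s \<subseteq> {0..3}" using z by auto
      moreover have "{0..3} \<noteq> {1,2,3,4::nat}" by auto
      ultimately show False using bd_uniq[OF s(1) W W0 s(2)] by blast
    qed
  qed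
  ultimately show ?thesis unfolding QQ_def by blast
qed



lemma PB_notQQ: assumes n: "4 \<le> n" shows "\<not> QQ (boundary_complex (PB n))"
proof
  assume "QQ (boundary_complex (PB n))"
  then obtain W where W: "card W = 4" "cliq (boundary_complex (PB n)) W" "\<forall>s\<in>boundary_complex (PB n). \<not> s \<subseteq> W"
    unfolding QQ_def by blast
  have b: "stacked_ball (PB n)" using n by (rule PB_ball)
  have cl: "cliq (PB n) W" using W(2) edg_bd_eq[OF b] unfolding cliq_def by simp
  have near: "y \<le> x + 3" if "x \<in> W" "y \<in> W" "x \<noteq> y" for x y
  proof -
    have "edg (PB n) x y" using cliqD[OF cl that] .
    then obtain T where "T \<in> PB n" "x \<in> T" "y \<in> T" unfolding edg_def by blast
    then obtain i where "T = {i..i+3}" unfolding PB_mem by blast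
    then show ?thesis using \<open>x \<in> T\<close> \<open>y \<in> T\<close> by simp
  qed
  have fW: "finite W" using W(1) by (metis card.infinite zero_neq_numeral)
  have fW2: "W \<noteq> {}" using W(1) by auto
  note fW = fW fW2
  define m where "m = Min W"
  have mW: "m \<in> W" unfolding m_def using fW by simp
  have sub: "W \<subseteq> {m..m+3}"
  proof
    fix w assume "w \<in> W"
    then have "m \<le> w" unfolding m_def using fW by simp
    moreover have "w \<le> m + 3" using near[OF mW \<open>w \<in> W\<close>] by (cases "w = m") auto
    ultimately show "w \<in> {m..m+3}" by simp
  qed
  have "W = {m..m+3}" using card_subset_eq[OF _ sub] W(1) by simp
  have "W \<subseteq> \<Union>(PB n)" using cliq_verts[OF cl] W(1) by simp
  then have "m + 3 < n" using PB_verts[OF n] \<open>W = {m..m+3}\<close> by auto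
  then have Tm: "{m..m+3} \<in> PB n" unfolding PB_mem by blast
  have "{m, m+1, m+3} \<in> boundary_complex (PB n)"
  proof (rule PB_bd[OF Tm])
    show "{m, m+1, m+3} \<subseteq> {m..m+3}" by auto
    show "card {m, m+1, m+3} = 3" by simp
    fix i assume "{i..i+3} \<in> PB n" "{m, m+1, m+3} \<subseteq> {i..i+3}"
    then have "i = m" by simp
    then show "{i..i+3} = {m..m+3}" by simp
  qed
  moreover have "{m, m+1, m+3} \<subseteq> W" using \<open>W = {m..m+3}\<close> by auto
  ultimately show False using W(3) by blast
qed

lemma adj_QQ: "pachner_adj n X Y \<Longrightarrow> QQ X \<longleftrightarrow> QQ Y"
proof -
  assume "pachner_adj n X Y"
  then obtain X' Y' where h: "stacked_sphere X" "stacked_sphere Y" "complex_iso X X'" "complex_iso Y Y'" "edge_flip X' Y'"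
    unfolding pachner_adj_def by blast
  have sX': "stacked_sphere X'" using sphere_iso[OF h(1) iso_sym[OF h(3)]] .
  have sY': "stacked_sphere Y'" using sphere_iso[OF h(2) iso_sym[OF h(4)]] .
  have "QQ X' \<longleftrightarrow> QQ Y'" using flip_QQ[OF sphere_good[OF sX'] sphere_good[OF sY'] h(5)] .
  moreover have "QQ X \<longleftrightarrow> QQ X'" using iso_QQ[OF h(3)] iso_QQ[OF iso_sym[OF h(3)]] by blast
  moreover have "QQ Y \<longleftrightarrow> QQ Y'" using iso_QQ[OF h(4)] iso_QQ[OF iso_sym[OF h(4)]] by blast
  ultimately show ?thesis by blast
qed

lemma path_QQ: "(symclp (pachner_adj n))\<^sup>*\<^sup>* X Y \<Longrightarrow> QQ X \<longleftrightarrow> QQ Y"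
proof (induction rule: rtranclp_induct)
  case base then show ?case by simp
next
  case (step y z)
  then have "QQ y \<longleftrightarrow> QQ z" using adj_QQ unfolding symclp_def by blast
  then show ?case using step.IH by simp
qed

lemma ball_sphere: "stacked_ball B \<Longrightarrow> stacked_sphere (boundary_complex B)"
  unfolding stacked_sphere_def using iso_refl by blast

theorem corollary4p6:
  fixes n :: nat
  assumes "n \<ge> 8"
  shows "\<not> pachner_graph_connected n"
proof
  assume conn: "pachner_graph_connected n"
  have bq: "stacked_ball (BQ n)" using BQ_ball assms by simp
  have bp: "stacked_ball (PB n)" using PB_ball assms by simp
  have nk: "num_vertices (boundary_complex (BQ n)) = n"
    unfolding num_vertices_def using bd_verts[OF bq] BQ_verts assms by simp
  have nl: "num_vertices (boundary_complex (PB n)) = n"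
    unfolding num_vertices_def using bd_verts[OF bp] PB_verts assms by simp
  have "(symclp (pachner_adj n))\<^sup>*\<^sup>* (boundary_complex (BQ n)) (boundary_complex (PB n))"
    using conn nk nl ball_sphere[OF bq] ball_sphere[OF bp] unfolding pachner_graph_connected_def by blast
  then have "QQ (boundary_complex (BQ n)) \<longleftrightarrow> QQ (boundary_complex (PB n))" by (rule path_QQ)
  then show False using BQ_QQ[OF assms] PB_notQQ assms by simp
qed


end
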